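(* Suppose $\mathbf v_1=(v_{11},v_{12})\neq0$, $\mathbf v_2=(v_{21},v_{22})\neq0$ and $d\neq0$. Then for every point $[u,y_1,y_2]\in Z(\mathbf v,d)$ not in $Z(\mathbf v,d)\cap G(\mathbf v,d)$, there is exactly one point of $HC_F(\mathbf v,d)$ mapped to $[u,y_1,y_2]$ by $\rho$.
   Context: On $\mathbb{C}P^4$ with coordinates $[u,y_1,y_2,r_1,r_2]$, let $L_1=v_{11}(u-y_1)-v_{12}y_2$, $L_2=-v_{21}(u+y_1)-v_{22}y_2$, $f_1=(u-y_1)^2+y_2^2$, $f_2=(u+y_1)^2+y_2^2$, and $HC_F(\mathbf v,d)=\{f_1=r_1^2,\ f_2=r_2^2,\ L_2r_1-L_1r_2-dr_1r_2=0\}$. Let $Z(\mathbf v,d)\subset\mathbb{C}P^2$ (coordinates $[u,y_1,y_2]$) be the zero set of $h=(L_2^2f_1+L_1^2f_2-d^2f_1f_2)^2-4L_1^2L_2^2f_1f_2$, let $G(\mathbf v,d)=\{[u,y_1,y_2]\in\mathbb{C}P^2: L_1L_2=0\}$, and let $\rho:HC_F(\mathbf v,d)\to Z(\mathbf v,d)$ be $\rho([u,y_1,y_2,r_1,r_2])=[u,y_1,y_2]$. Parameters are complex. *)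

theory Defs
  imports Complex_Main
begin

text \<open>Points of CP^2 and CP^4 are represented by nonzero homogeneous coordinate
tuples; two tuples represent the same projective point iff they are proportional
by a nonzero complex scalar.\<close>

type_synonym hc3 = "complex \<times> complex \<times> complex"
type_synonym hc5 = "complex \<times> complex \<times> complex \<times> complex \<times> complex"

definition proj_eq3 :: "hc3 \<Rightarrow> hc3 \<Rightarrow> bool" where
  "proj_eq3 p q \<longleftrightarrow> (\<exists>c. c \<noteq> 0 \<and>
     (case p of (a,b,e) \<Rightarrow> case q of (a',b',e') \<Rightarrow> a = c*a' \<and> b = c*b' \<and> e = c*e'))"

definition proj_eq5 :: "hc5 \<Rightarrow> hc5 \<Rightarrow> bool" where
  "proj_eq5 p q \<longleftrightarrow> (\<exists>c. c \<noteq> 0 \<and>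
     (case p of (a,b,e,s,t) \<Rightarrow> case q of (a',b',e',s',t') \<Rightarrow>
        a = c*a' \<and> b = c*b' \<and> e = c*e' \<and> s = c*s' \<and> t = c*t'))"

definition L1 :: "complex \<Rightarrow> complex \<Rightarrow> complex \<Rightarrow> complex \<Rightarrow> complex \<Rightarrow> complex" where
  "L1 v11 v12 u y1 y2 = v11 * (u - y1) - v12 * y2"

definition L2 :: "complex \<Rightarrow> complex \<Rightarrow> complex \<Rightarrow> complex \<Rightarrow> complex \<Rightarrow> complex" where
  "L2 v21 v22 u y1 y2 = - v21 * (u + y1) - v22 * y2"

definition f1 :: "complex \<Rightarrow> complex \<Rightarrow> complex \<Rightarrow> complex" where
  "f1 u y1 y2 = (u - y1)^2 + y2^2"

definition f2 :: "complex \<Rightarrow> complex \<Rightarrow> complex \<Rightarrow> complex" where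
  "f2 u y1 y2 = (u + y1)^2 + y2^2"

definition HC_F :: "complex \<Rightarrow> complex \<Rightarrow> complex \<Rightarrow> complex \<Rightarrow> complex \<Rightarrow> hc5 set" where
  "HC_F v11 v12 v21 v22 d = {(u,y1,y2,r1,r2). (u,y1,y2,r1,r2) \<noteq> (0,0,0,0,0) \<and>
      f1 u y1 y2 = r1^2 \<and> f2 u y1 y2 = r2^2 \<and>
      L2 v21 v22 u y1 y2 * r1 - L1 v11 v12 u y1 y2 * r2 - d * r1 * r2 = 0}"

definition hpoly :: "complex \<Rightarrow> complex \<Rightarrow> complex \<Rightarrow> complex \<Rightarrow> complex \<Rightarrow> complex \<Rightarrow> complex \<Rightarrow> complex \<Rightarrow> complex" where
  "hpoly v11 v12 v21 v22 d u y1 y2 =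
     (let l1 = L1 v11 v12 u y1 y2; l2 = L2 v21 v22 u y1 y2; g1 = f1 u y1 y2; g2 = f2 u y1 y2 in
      (l2^2 * g1 + l1^2 * g2 - d^2 * g1 * g2)^2 - 4 * l1^2 * l2^2 * g1 * g2)"

definition Zset :: "complex \<Rightarrow> complex \<Rightarrow> complex \<Rightarrow> complex \<Rightarrow> complex \<Rightarrow> hc3 set" where
  "Zset v11 v12 v21 v22 d = {(u,y1,y2). (u,y1,y2) \<noteq> (0,0,0) \<and> hpoly v11 v12 v21 v22 d u y1 y2 = 0}"

definition Gset :: "complex \<Rightarrow> complex \<Rightarrow> complex \<Rightarrow> complex \<Rightarrow> hc3 set" where
  "Gset v11 v12 v21 v22 = {(u,y1,y2). (u,y1,y2) \<noteq> (0,0,0) \<and>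
      L1 v11 v12 u y1 y2 * L2 v21 v22 u y1 y2 = 0}"

definition rho :: "hc5 \<Rightarrow> hc3" where
  "rho p = (case p of (u,y1,y2,r1,r2) \<Rightarrow> (u,y1,y2))"

end

theory Submission
  imports Defs
begin

lemma uniq_aux:
  fixes A B d r1 r2 t1 t2 F1 F2 :: complex
  assumes "A \<noteq> 0" "B \<noteq> 0" "d \<noteq> 0"
    and "t1^2 = r1^2" "t2^2 = r2^2"
    and e1: "B * r1 - A * r2 - d * r1 * r2 = 0"
    and e2: "B * t1 - A * t2 - d * t1 * t2 = 0"
  shows "t1 = r1 \<and> t2 = r2"
proof -
  have s1: "t1 = r1 \<or> t1 = - r1" using assms(4) by (metis power2_eq_iff)
  have s2: "t2 = r2 \<or> t2 = - r2" using assms(5) by (metis power2_eq_iff)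
  show ?thesis
  proof (cases "t1 = r1")
    case T1: True
    show ?thesis
    proof (cases "t2 = r2")
      case True with T1 show ?thesis by simp
    next
      case False
      with s2 have t2: "t2 = - r2" by simp
      have "2 * B * r1 = 0" using e1 e2 T1 t2 by algebra
      hence "r1 = 0" using assms by simp
      with e1 have "r2 = 0" using assms by simp
      with T1 t2 show ?thesis by simp
    qed
  next
    case F1: False
    with s1 have t1: "t1 = - r1" by simp
    show ?thesis
    proof (cases "t2 = r2")
      case True
      have "2 * A * r2 = 0" using e1 e2 t1 True by algebra
      hence "r2 = 0" using assms by simp
      with e1 have "r1 = 0" using assms by simp
      with t1 True show ?thesis by simp
    next
      case False
      with s2 have t2: "t2 = - r2" by simp
      have "2 * d * r1 * r2 = 0" using e1 e2 t1 t2 by algebra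
      hence "r1 = 0 \<or> r2 = 0" using assms by simp
      hence "r1 = 0 \<and> r2 = 0" using e1 assms by auto
      with t1 t2 show ?thesis by simp
    qed
  qed
qed

lemma prod_id:
  fixes A B d s1 s2 :: complex
  shows "(B * s1 - A * s2 - d * s1 * s2) * (B * (-s1) - A * s2 - d * (-s1) * s2) *
         (B * s1 - A * (-s2) - d * s1 * (-s2)) * (B * (-s1) - A * (-s2) - d * (-s1) * (-s2))
       = (B^2 * s1^2 + A^2 * s2^2 - d^2 * s1^2 * s2^2)^2 - 4 * A^2 * B^2 * s1^2 * s2^2"
  by algebra


theorem lemma8p5:
  fixes v11 v12 v21 v22 d :: complex and p :: hc3
  assumes "(v11, v12) \<noteq> (0, 0)" and "(v21, v22) \<noteq> (0, 0)" and "d \<noteq> 0"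
    and "p \<in> Zset v11 v12 v21 v22 d" and "p \<notin> Gset v11 v12 v21 v22"
  shows "\<exists>q \<in> HC_F v11 v12 v21 v22 d. proj_eq3 (rho q) p \<and>
           (\<forall>q' \<in> HC_F v11 v12 v21 v22 d. proj_eq3 (rho q') p \<longrightarrow> proj_eq5 q' q)"
proof -
  obtain u y1 y2 where p: "p = (u,y1,y2)" by (cases p)
  define A where "A = L1 v11 v12 u y1 y2"
  define B where "B = L2 v21 v22 u y1 y2"
  define F1 where "F1 = f1 u y1 y2"
  define F2 where "F2 = f2 u y1 y2"
  have pnz: "(u,y1,y2) \<noteq> (0,0,0)" and h0: "hpoly v11 v12 v21 v22 d u y1 y2 = 0"
    using assms(4) p by (auto simp: Zset_def)
  have AB: "A * B \<noteq> 0" using assms(5) p pnz by (auto simp: Gset_def A_def B_def)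
  hence Anz: "A \<noteq> 0" and Bnz: "B \<noteq> 0" by auto
  define s1 where "s1 = csqrt F1"
  define s2 where "s2 = csqrt F2"
  have sq1: "s1^2 = F1" and sq2: "s2^2 = F2" by (simp_all add: s1_def s2_def)
  have "(B * s1 - A * s2 - d * s1 * s2) * (B * (-s1) - A * s2 - d * (-s1) * s2) *
         (B * s1 - A * (-s2) - d * s1 * (-s2)) * (B * (-s1) - A * (-s2) - d * (-s1) * (-s2)) = 0"
    unfolding prod_id using h0 by (simp add: hpoly_def Let_def sq1 sq2 A_def B_def F1_def F2_def)
  then obtain r1 r2 where r1: "r1^2 = F1" and r2: "r2^2 = F2"
     and eq: "B * r1 - A * r2 - d * r1 * r2 = 0"
    using sq1 sq2 by (smt (verit) mult_eq_0_iff power2_minus)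
  define q where "q = (u,y1,y2,r1,r2)"
  have qin: "q \<in> HC_F v11 v12 v21 v22 d"
    using pnz r1 r2 eq by (auto simp: q_def HC_F_def A_def B_def F1_def F2_def)
  have qp: "proj_eq3 (rho q) p"
    by (auto simp: proj_eq3_def rho_def q_def p intro: exI[of _ 1])
  have "proj_eq5 q' q" if q'in: "q' \<in> HC_F v11 v12 v21 v22 d" and q'p: "proj_eq3 (rho q') p" for q'
  proof -
    obtain u' y1' y2' r1' r2' where q': "q' = (u',y1',y2',r1',r2')" by (cases q') 
    obtain c where c: "c \<noteq> 0" "u' = c*u" "y1' = c*y1" "y2' = c*y2"
      using q'p by (auto simp: proj_eq3_def rho_def q' p)
    have h1: "r1'^2 = c^2 * F1" and h2: "r2'^2 = c^2 * F2"
      and he: "L2 v21 v22 u' y1' y2' * r1' - L1 v11 v12 u' y1' y2' * r2' - d * r1' * r2' = 0"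
      using q'in c by (auto simp: q' HC_F_def F1_def F2_def f1_def f2_def power2_eq_square algebra_simps)
    have L1s: "L1 v11 v12 u' y1' y2' = c * A" and L2s: "L2 v21 v22 u' y1' y2' = c * B"
      using c by (auto simp: A_def B_def L1_def L2_def algebra_simps)
    have "r1' = c * r1 \<and> r2' = c * r2"
    proof (rule uniq_aux[of "c*A" "c*B" d])
      show "c * A \<noteq> 0" "c * B \<noteq> 0" "d \<noteq> 0" using c Anz Bnz assms(3) by auto
      show "r1'^2 = (c*r1)^2" using h1 r1 by (simp add: power_mult_distrib)
      show "r2'^2 = (c*r2)^2" using h2 r2 by (simp add: power_mult_distrib)
      show "c * B * r1' - c * A * r2' - d * r1' * r2' = 0" using he L1s L2s by simp
      have "c * B * (c * r1) - c * A * (c * r2) - d * (c * r1) * (c * r2)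
            = c^2 * (B * r1 - A * r2 - d * r1 * r2)" by algebra
      then show "c * B * (c * r1) - c * A * (c * r2) - d * (c * r1) * (c * r2) = 0" using eq by simp
    qed
    then show ?thesis using c by (auto simp: proj_eq5_def q' q_def)
  qed
  then show ?thesis using qin qp by blast
qed

end
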